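(* Let $\mathcal{A}$ be a strongly connected $d$-dimensional VASS MDP and $(\mathbf{y},\mathbf{z})$ a maximal solution of constraint system (II). There is a constant $k$ depending only on $\mathcal{A}$ (and $\mathbf{y},\mathbf{z}$) such that for every counter $c$ with $\mathbf{y}(c)>0$, every $\varepsilon>0$, every $p\in Q$ and every strategy $\sigma$, there exists $n_0$ such that for all $n\ge n_0$: $\mathbb{P}^\sigma_{p\mathbf{n}}\big(\mathcal{C}[c]\ge n^{1+\varepsilon}\big)\le k\,n^{-\varepsilon}$.
   Context: Let $d\ge 1$. A $d$-dimensional VASS MDP is a tuple $\mathcal{A}=(Q,(Q_n,Q_p),T,P)$, where $Q$ is a finite nonempty set of states partitioned into nondeterministic states $Q_n$ and probabilistic states $Q_p$; $T\subseteq Q\times\mathbb{Z}^d\times Q$ is a finite set of transitions such that for every $p\in Q$ the set $\mathit{Out}(p)$ of transitions of the form $(p,\mathbf{u},q)$ is nonempty; and $P$ assigns to every $t\in\mathit{Out}(p)$ with $p\in Q_p$ a positive rational probability such that $\sum_{t\in\mathit{Out}(p)}P(t)=1$. For $t=(p,\mathbf{u},q)$ write $\mathbf{u}_t=\mathbf{u}$. $\mathcal{A}$ is strongly connected if its underlying graph is strongly connected. A strategy $\sigma$ maps every finite path ending in a state $p\in Q_n$ to a probability distribution over $\mathit{Out}(p)$. A configuration $p\mathbf{v}$ ($p\in Q$, $\mathbf{v}\in\mathbb{Z}^d$) is terminal if some component of $\mathbf{v}$ is negative. A computation from $p\mathbf{v}$ along an infinite path $p_0,\mathbf{u}_1,p_1,\dots$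 is $p_0\mathbf{v}_0,p_1\mathbf{v}_1,\dots$ with $\mathbf{v}_0=\mathbf{v}$, $\mathbf{v}_{i+1}=\mathbf{v}_i+\mathbf{u}_{i+1}$; $\mathit{Term}(\pi)$ is the least $j$ with $p_j\mathbf{v}_j$ terminal ($\infty$ if none). $\mathbb{P}^\sigma_{p\mathbf{v}}$ is the probability measure on computations from $p\mathbf{v}$ under $\sigma$. $\mathbf{n}$ is the vector with all components $n$. $\mathcal{C}[c](\pi)=\sup\{\mathbf{v}_i(c):0\le i<\mathit{Term}(\pi)\}$. Constraint system (II): find $\mathbf{y}\in\mathbb{Z}^d$, $\mathbf{z}\in\mathbb{Z}^Q$ with $\mathbf{y}\ge\vec 0$, $\mathbf{z}\ge\vec 0$, $\mathbf{z}(q)-\mathbf{z}(p)+\sum_{i=1}^d\mathbf{u}(i)\mathbf{y}(i)\le 0$ for every $(p,\mathbf{u},q)\in T$ with $p\in Q_n$, and $\sum_{t=(p,\mathbf{u},q)\in\mathit{Out}(p)}P(t)\big(\mathbf{z}(q)-\mathbf{z}(p)+\sum_{i=1}^d\mathbf{u}_t(i)\mathbf{y}(i)\big)\le 0$ for every $p\in Q_p$. Its objective inequalities are $\mathbf{y}(c)>0$ for each counter $c$, the strict versions of the inequality for each $(p,\mathbf{u},q)\in T$ with $p\in Q_n$, and the strict version of the probabilistic inequality for each $p\in Q_p$. A solution is maximal if every objective inequality satisfied strictly by some solution is satisfied strictly by it. *)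

theory Defs
  imports Complex_Main "HOL-Library.Extended_Real"
begin

text \<open>States are the elements of a finite (nonempty) type 'q,
  counters are the elements of a finite (nonempty) type 'd (so d = CARD('d) \<ge> 1).
  Qn is the set of nondeterministic states, its complement the probabilistic states.
  A transition (p,u,q) is a triple; T is the finite transition set, P the probability
  assignment (only relevant on transitions leaving probabilistic states).\<close>

type_synonym ('q,'d) trans = "'q \<times> ('d \<Rightarrow> int) \<times> 'q"

definition upd :: "('q,'d) trans \<Rightarrow> ('d \<Rightarrow> int)" where
  "upd t = fst (snd t)"

definition tgt :: "('q,'d) trans \<Rightarrow> 'q" where
  "tgt t = snd (snd t)"

definition Out :: "('q,'d) trans set \<Rightarrow> 'q \<Rightarrow> ('q,'d) trans set" where
  "Out T p = {t \<in> T. fst t = p}"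

definition vass_mdp ::
  "'q::finite set \<Rightarrow> ('q,'d::finite) trans set \<Rightarrow> (('q,'d) trans \<Rightarrow> real) \<Rightarrow> bool" where
  "vass_mdp Qn T P \<longleftrightarrow> finite T \<and> (\<forall>p. Out T p \<noteq> {}) \<and>
     (\<forall>p. p \<notin> Qn \<longrightarrow> (\<forall>t\<in>Out T p. P t > 0 \<and> P t \<in> \<rat>) \<and> sum P (Out T p) = 1)"

definition strongly_connected :: "('q,'d) trans set \<Rightarrow> bool" where
  "strongly_connected T \<longleftrightarrow> (\<forall>p q. (p, q) \<in> {(fst t, tgt t) | t. t \<in> T}\<^sup>*)"

definition lin :: "('d::finite \<Rightarrow> int) \<Rightarrow> ('d \<Rightarrow> int) \<Rightarrow> int" where
  "lin y u = (\<Sum>i\<in>UNIV. u i * y i)"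

definition edge_val :: "('d::finite \<Rightarrow> int) \<Rightarrow> ('q \<Rightarrow> int) \<Rightarrow> ('q,'d) trans \<Rightarrow> int" where
  "edge_val y z t = z (tgt t) - z (fst t) + lin y (upd t)"

definition prob_val ::
  "('q,'d::finite) trans set \<Rightarrow> (('q,'d) trans \<Rightarrow> real) \<Rightarrow> ('d \<Rightarrow> int) \<Rightarrow> ('q \<Rightarrow> int) \<Rightarrow> 'q \<Rightarrow> real" where
  "prob_val T P y z p = (\<Sum>t\<in>Out T p. P t * real_of_int (edge_val y z t))"

definition sol_II ::
  "'q::finite set \<Rightarrow> ('q,'d::finite) trans set \<Rightarrow> (('q,'d) trans \<Rightarrow> real) \<Rightarrow>
   ('d \<Rightarrow> int) \<Rightarrow> ('q \<Rightarrow> int) \<Rightarrow> bool" where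
  "sol_II Qn T P y z \<longleftrightarrow> (\<forall>c. y c \<ge> 0) \<and> (\<forall>p. z p \<ge> 0) \<and>
     (\<forall>t\<in>T. fst t \<in> Qn \<longrightarrow> edge_val y z t \<le> 0) \<and>
     (\<forall>p. p \<notin> Qn \<longrightarrow> prob_val T P y z p \<le> 0)"

text \<open>Objective inequalities: indexed by counters (Inl c), transitions (Inr (Inl t)) and
  states (Inr (Inr p)); this predicate says the objective is satisfied strictly.\<close>

definition obj_strict ::
  "'q::finite set \<Rightarrow> ('q,'d::finite) trans set \<Rightarrow> (('q,'d) trans \<Rightarrow> real) \<Rightarrow>
   ('d \<Rightarrow> int) \<Rightarrow> ('q \<Rightarrow> int) \<Rightarrow> 'd + ('q,'d) trans + 'q \<Rightarrow> bool" where
  "obj_strict Qn T P y z ob = (case ob of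
      Inl c \<Rightarrow> y c > 0
    | Inr (Inl t) \<Rightarrow> t \<in> T \<and> fst t \<in> Qn \<and> edge_val y z t < 0
    | Inr (Inr p) \<Rightarrow> p \<notin> Qn \<and> prob_val T P y z p < 0)"

definition maximal_sol_II ::
  "'q::finite set \<Rightarrow> ('q,'d::finite) trans set \<Rightarrow> (('q,'d) trans \<Rightarrow> real) \<Rightarrow>
   ('d \<Rightarrow> int) \<Rightarrow> ('q \<Rightarrow> int) \<Rightarrow> bool" where
  "maximal_sol_II Qn T P y z \<longleftrightarrow> sol_II Qn T P y z \<and>
     (\<forall>y' z'. sol_II Qn T P y' z' \<longrightarrow>
        (\<forall>ob. obj_strict Qn T P y' z' ob \<longrightarrow> obj_strict Qn T P y z ob))"

text \<open>Finite paths: an initial state p0 followed by a list of transitions.\<close>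

fun valid_path :: "('q,'d) trans set \<Rightarrow> 'q \<Rightarrow> ('q,'d) trans list \<Rightarrow> bool" where
  "valid_path T p [] = True"
| "valid_path T p (t # ts) = (t \<in> T \<and> fst t = p \<and> valid_path T (tgt t) ts)"

fun last_state :: "'q \<Rightarrow> ('q,'d) trans list \<Rightarrow> 'q" where
  "last_state p [] = p"
| "last_state p (t # ts) = last_state (tgt t) ts"

text \<open>A (randomized, history-dependent) strategy: sigma p0 ts is the distribution over the
  next transition after the finite path (p0, ts), whenever it ends in a nondeterministic state.\<close>

definition is_strategy ::
  "'q set \<Rightarrow> ('q,'d) trans set \<Rightarrow> ('q \<Rightarrow> ('q,'d) trans list \<Rightarrow> ('q,'d) trans \<Rightarrow> real) \<Rightarrow> bool" where
  "is_strategy Qn T \<sigma> \<longleftrightarrow> (\<forall>p0 ts. valid_path T p0 ts \<and> last_state p0 ts \<in> Qn \<longrightarrow>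
      (\<forall>t. \<sigma> p0 ts t \<ge> 0) \<and> (\<forall>t. t \<notin> Out T (last_state p0 ts) \<longrightarrow> \<sigma> p0 ts t = 0) \<and>
      sum (\<sigma> p0 ts) (Out T (last_state p0 ts)) = 1)"

definition step_prob ::
  "'q set \<Rightarrow> ('q,'d) trans set \<Rightarrow> (('q,'d) trans \<Rightarrow> real) \<Rightarrow>
   ('q \<Rightarrow> ('q,'d) trans list \<Rightarrow> ('q,'d) trans \<Rightarrow> real) \<Rightarrow>
   'q \<Rightarrow> ('q,'d) trans list \<Rightarrow> ('q,'d) trans \<Rightarrow> real" where
  "step_prob Qn T P \<sigma> p0 ts t =
     (if t \<in> Out T (last_state p0 ts)
      then (if last_state p0 ts \<in> Qn then \<sigma> p0 ts t else P t) else 0)"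

text \<open>Probability (under sigma, from p0) of the cylinder of the finite path (p0, ts).\<close>

definition path_weight ::
  "'q set \<Rightarrow> ('q,'d) trans set \<Rightarrow> (('q,'d) trans \<Rightarrow> real) \<Rightarrow>
   ('q \<Rightarrow> ('q,'d) trans list \<Rightarrow> ('q,'d) trans \<Rightarrow> real) \<Rightarrow>
   'q \<Rightarrow> ('q,'d) trans list \<Rightarrow> real" where
  "path_weight Qn T P \<sigma> p0 ts = (\<Prod>i<length ts. step_prob Qn T P \<sigma> p0 (take i ts) (ts ! i))"

definition cval :: "('d \<Rightarrow> int) \<Rightarrow> ('q,'d) trans list \<Rightarrow> nat \<Rightarrow> ('d \<Rightarrow> int)" where
  "cval v ts i = (\<lambda>c. v c + (\<Sum>j<i. upd (ts ! j) c))"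

definition terminal :: "('d \<Rightarrow> int) \<Rightarrow> bool" where
  "terminal w \<longleftrightarrow> (\<exists>c. w c < 0)"

text \<open>C[c] restricted to the first length(ts) steps: sup of v_i(c) over i \<le> length ts, i < Term.\<close>

definition C_upto :: "('d \<Rightarrow> int) \<Rightarrow> ('q,'d) trans list \<Rightarrow> 'd \<Rightarrow> ereal" where
  "C_upto v ts c = Sup {ereal (real_of_int (cval v ts i c)) | i.
      i \<le> length ts \<and> (\<forall>j\<le>i. \<not> terminal (cval v ts j))}"

text \<open>P^sigma_{p v}(C[c] \<ge> x). The event is the increasing union over m of the events
  determined by the first m steps (C[c] is a sup of integers, so C[c] \<ge> x iff some
  prefix already witnesses it); by continuity of the path measure its probability is the
  supremum over m of the probabilities of these cylinder events.\<close>

definition Prob_C_ge ::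
  "'q set \<Rightarrow> ('q,'d) trans set \<Rightarrow> (('q,'d) trans \<Rightarrow> real) \<Rightarrow>
   ('q \<Rightarrow> ('q,'d) trans list \<Rightarrow> ('q,'d) trans \<Rightarrow> real) \<Rightarrow>
   'q \<Rightarrow> ('d \<Rightarrow> int) \<Rightarrow> 'd \<Rightarrow> real \<Rightarrow> real" where
  "Prob_C_ge Qn T P \<sigma> p v c x = (SUP m::nat.
     (\<Sum>ts\<in>{ts. length ts = m \<and> set ts \<subseteq> T}.
        path_weight Qn T P \<sigma> p ts * (if C_upto v ts c \<ge> ereal x then 1 else 0)))"

end

theory Submission
  imports Defs
begin

lemma last_state_append: "last_state p (ts @ us) = last_state (last_state p ts) us"
  by (induction ts arbitrary: p) auto

lemma valid_path_append: "valid_path T p (ts @ us) = (valid_path T p ts \<and> valid_path T (last_state p ts) us)"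
  by (induction ts arbitrary: p) auto

lemma cval_append: "i \<le> length ts \<Longrightarrow> cval v (ts @ us) i = cval v ts i"
  unfolding cval_def by (auto simp: nth_append intro!: sum.cong)

lemma cval_snoc: "cval v (ts @ [t]) (Suc (length ts)) = (\<lambda>c. cval v ts (length ts) c + upd t c)"
  unfolding cval_def by (auto simp: nth_append)

lemma lin_add: "lin y (\<lambda>c. a c + b c) = lin y a + lin y b"
  unfolding lin_def by (simp add: algebra_simps sum.distrib)

lemma path_weight_snoc:
  "path_weight Qn T P \<sigma> p ts' = path_weight Qn T P \<sigma> p ts * step_prob Qn T P \<sigma> p ts t"
  if "ts' = ts @ [t]"
proof -
  have "(\<Prod>i<length ts. step_prob Qn T P \<sigma> p (take i (ts @ [t])) ((ts @ [t]) ! i)) =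
        (\<Prod>i<length ts. step_prob Qn T P \<sigma> p (take i ts) (ts ! i))"
    by (rule prod.cong) (auto simp: nth_append)
  then show ?thesis unfolding path_weight_def that by (simp add: prod.lessThan_Suc)
qed

lemma ereal_le_Sup_finite:
  fixes S :: "ereal set"
  assumes "finite S"
  shows "ereal a \<le> Sup S \<longleftrightarrow> (\<exists>s\<in>S. ereal a \<le> s)"
proof (cases "S = {}")
  case True then show ?thesis by (simp add: bot_ereal_def)
next
  case False
  have "Sup S \<in> S" by (rule finite_Sup_in[OF assms False]) (auto simp: sup_max max_def)
  then show ?thesis by (meson Sup_upper order_trans)
qed

lemma C_upto_ge:
  "(ereal x \<le> C_upto v ts c) \<longleftrightarrow>
   (\<exists>i\<le>length ts. (\<forall>j\<le>i. \<not> terminal (cval v ts j)) \<and> x \<le> real_of_int (cval v ts i c))"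
proof -
  have eq: "{ereal (real_of_int (cval v ts i c)) | i.
      i \<le> length ts \<and> (\<forall>j\<le>i. \<not> terminal (cval v ts j))} =
      (\<lambda>i. ereal (real_of_int (cval v ts i c))) ` {i. i \<le> length ts \<and> (\<forall>j\<le>i. \<not> terminal (cval v ts j))}"
    by auto
  show ?thesis unfolding C_upto_def eq
    by (subst ereal_le_Sup_finite) auto
qed

definition gval :: "('d::finite \<Rightarrow> int) \<Rightarrow> ('q \<Rightarrow> int) \<Rightarrow> 'q \<Rightarrow> ('d \<Rightarrow> int) \<Rightarrow> ('q,'d) trans list \<Rightarrow> real" where
  "gval y z p v ts = real_of_int (z (last_state p ts) + lin y (cval v ts (length ts)))"

definition NT :: "('d \<Rightarrow> int) \<Rightarrow> ('q,'d) trans list \<Rightarrow> bool" where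
  "NT v ts = (\<forall>j\<le>length ts. \<not> terminal (cval v ts j))"

definition Hit :: "('d \<Rightarrow> int) \<Rightarrow> 'd \<Rightarrow> real \<Rightarrow> ('q,'d) trans list \<Rightarrow> bool" where
  "Hit v c x ts = (\<exists>i\<le>length ts. (\<forall>j\<le>i. \<not> terminal (cval v ts j)) \<and> x \<le> real_of_int (cval v ts i c))"

lemma Hit_snoc: "Hit v c x ts \<Longrightarrow> Hit v c x (ts @ [t])"
  unfolding Hit_def by (metis (no_types, lifting) cval_append le_trans length_append_singleton le_Suc_eq)

lemma notNT_snoc: "\<not> NT v ts \<Longrightarrow> \<not> NT v (ts @ [t])"
  unfolding NT_def by (metis cval_append le_SucI length_append_singleton)

lemma Hit_snoc_cases:
  assumes "Hit v c x (ts @ [t])" "\<not> Hit v c x ts"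
  shows "NT v (ts @ [t]) \<and> x \<le> real_of_int (cval v (ts @ [t]) (Suc (length ts)) c)"
proof -
  obtain i where i: "i \<le> Suc (length ts)" "\<forall>j\<le>i. \<not> terminal (cval v (ts @ [t]) j)"
     "x \<le> real_of_int (cval v (ts @ [t]) i c)"
    using assms(1) unfolding Hit_def by auto
  show ?thesis
  proof (cases "i \<le> length ts")
    case True
    then have "Hit v c x ts" unfolding Hit_def using i
      by (metis cval_append le_trans)
    then show ?thesis using assms(2) by blast
  next
    case False
    then have "i = Suc (length ts)" using i(1) by simp
    then show ?thesis using i unfolding NT_def by simp
  qed
qed

lemma Hit_notNT: "\<not> Hit v c x ts \<Longrightarrow> \<not> NT v ts \<Longrightarrow> \<not> Hit v c x (ts @ [t])"
proof
  assume h: "\<not> Hit v c x ts" "\<not> NT v ts" "Hit v c x (ts @ [t])"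
  from Hit_snoc_cases[OF h(3) h(1)] have "NT v (ts @ [t])" by simp
  with notNT_snoc[OF h(2)] show False by simp
qed

lemma lin_nonneg: "(\<forall>c. y c \<ge> 0) \<Longrightarrow> (\<forall>c. w c \<ge> 0) \<Longrightarrow> lin y w \<ge> 0"
  unfolding lin_def by (intro sum_nonneg) auto

lemma lin_ge_single: "(\<forall>c. y c \<ge> 0) \<Longrightarrow> (\<forall>c. w c \<ge> 0) \<Longrightarrow> w c * y c \<le> lin y w"
  unfolding lin_def by (rule member_le_sum) auto

lemma NT_nonneg: "NT v ts \<Longrightarrow> i \<le> length ts \<Longrightarrow> cval v ts i c \<ge> 0"
  unfolding NT_def terminal_def by (meson not_le)

lemma gval_nonneg: "sol_II Qn T P y z \<Longrightarrow> NT v ts \<Longrightarrow> gval y z p v ts \<ge> 0"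
  unfolding gval_def sol_II_def using lin_nonneg[of y "cval v ts (length ts)"] NT_nonneg[of v ts]
  by (smt (verit) le_refl of_int_nonneg)

lemma gval_hit: "sol_II Qn T P y z \<Longrightarrow> y c > 0 \<Longrightarrow> NT v ts \<Longrightarrow> x \<le> real_of_int (cval v ts (length ts) c)
   \<Longrightarrow> x \<le> gval y z p v ts"
proof -
  assume sol: "sol_II Qn T P y z" and yc: "y c > 0" and nt: "NT v ts" and xl: "x \<le> real_of_int (cval v ts (length ts) c)"
  let ?w = "cval v ts (length ts)"
  have w0: "\<forall>c. ?w c \<ge> 0" using NT_nonneg[OF nt] by auto
  have y0: "\<forall>c. y c \<ge> 0" using sol unfolding sol_II_def by auto
  have "?w c \<le> ?w c * y c" using w0 yc mult_left_mono[of 1 "y c" "?w c"] by simp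
  also have "\<dots> \<le> lin y ?w" by (rule lin_ge_single[OF y0 w0])
  also have "\<dots> \<le> z (last_state p ts) + lin y ?w" using sol unfolding sol_II_def by auto
  finally have "real_of_int (?w c) \<le> real_of_int (z (last_state p ts) + lin y ?w)" by (simp only: of_int_le_iff)
  then show ?thesis using xl unfolding gval_def by linarith
qed

lemma gval_snoc: "fst t = last_state p ts \<Longrightarrow>
   gval y z p v (ts @ [t]) = gval y z p v ts + real_of_int (edge_val y z t)"
proof -
  assume "fst t = last_state p ts"
  have "lin y (cval v (ts @ [t]) (length (ts @ [t]))) = lin y (cval v ts (length ts)) + lin y (upd t)"
    using cval_snoc[of v ts t] lin_add[of y "cval v ts (length ts)" "upd t"] by simp
  moreover have "last_state p (ts @ [t]) = tgt t" by (simp add: last_state_append)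
  ultimately show ?thesis using \<open>fst t = last_state p ts\<close> unfolding gval_def edge_val_def by simp
qed

definition Fv where
  "Fv y z p v c x K ts = (if Hit v c x ts then x else if NT v ts then gval y z p v ts + K else 0)"

lemma Out_sub: "Out T q \<subseteq> T" unfolding Out_def by auto

lemma sp_nonneg:
  assumes "vass_mdp Qn T P" "is_strategy Qn T \<sigma>" "valid_path T p ts"
  shows "step_prob Qn T P \<sigma> p ts t \<ge> 0"
proof (cases "t \<in> Out T (last_state p ts)")
  case True
  show ?thesis
  proof (cases "last_state p ts \<in> Qn")
    case True
    then have "\<forall>t. \<sigma> p ts t \<ge> 0" using assms(2,3) unfolding is_strategy_def by blast
    moreover have "step_prob Qn T P \<sigma> p ts t = \<sigma> p ts t"
      unfolding step_prob_def using True \<open>t \<in> Out T (last_state p ts)\<close> by simp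
    ultimately show ?thesis by metis
  next
    case False
    then have "P t > 0" using assms(1) \<open>t \<in> Out T (last_state p ts)\<close> unfolding vass_mdp_def by auto
    then show ?thesis using False unfolding step_prob_def by auto
  qed
qed (simp add: step_prob_def)

lemma sum_T_Out:
  assumes "finite T"
  shows "(\<Sum>t\<in>T. step_prob Qn T P \<sigma> p ts t * f t) = (\<Sum>t\<in>Out T (last_state p ts). step_prob Qn T P \<sigma> p ts t * f t)"
  by (rule sum.mono_neutral_right) (auto simp: assms Out_sub step_prob_def)

lemma sp_sum:
  assumes "vass_mdp Qn T P" "is_strategy Qn T \<sigma>" "valid_path T p ts"
  shows "(\<Sum>t\<in>T. step_prob Qn T P \<sigma> p ts t) = 1"
proof -
  have fin: "finite T" using assms(1) unfolding vass_mdp_def by auto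
  have "(\<Sum>t\<in>T. step_prob Qn T P \<sigma> p ts t) = (\<Sum>t\<in>Out T (last_state p ts). step_prob Qn T P \<sigma> p ts t)"
    using sum_T_Out[OF fin, of Qn P \<sigma> p ts "\<lambda>_. 1"] by simp
  also have "\<dots> = 1"
  proof (cases "last_state p ts \<in> Qn")
    case True
    then show ?thesis using assms(2,3) unfolding is_strategy_def step_prob_def by simp
  next
    case False
    then show ?thesis using assms(1) unfolding vass_mdp_def step_prob_def by simp
  qed
  finally show ?thesis .
qed

lemma sp_ev:
  assumes "vass_mdp Qn T P" "is_strategy Qn T \<sigma>" "valid_path T p ts" "sol_II Qn T P y z"
  shows "(\<Sum>t\<in>T. step_prob Qn T P \<sigma> p ts t * real_of_int (edge_val y z t)) \<le> 0"
proof -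
  have fin: "finite T" using assms(1) unfolding vass_mdp_def by auto
  have "(\<Sum>t\<in>T. step_prob Qn T P \<sigma> p ts t * real_of_int (edge_val y z t)) =
     (\<Sum>t\<in>Out T (last_state p ts). step_prob Qn T P \<sigma> p ts t * real_of_int (edge_val y z t))"
    by (rule sum_T_Out[OF fin])
  also have "\<dots> \<le> 0"
  proof (cases "last_state p ts \<in> Qn")
    case True
    have "step_prob Qn T P \<sigma> p ts t * real_of_int (edge_val y z t) \<le> 0" if "t \<in> Out T (last_state p ts)" for t
    proof -
      have "edge_val y z t \<le> 0" using assms(4) that True unfolding sol_II_def Out_def by auto
      moreover have "step_prob Qn T P \<sigma> p ts t \<ge> 0" by (rule sp_nonneg[OF assms(1-3)])
      ultimately show ?thesis by (simp add: mult_nonneg_nonpos)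
    qed
    then show ?thesis by (intro sum_nonpos) auto
  next
    case False
    then have "(\<Sum>t\<in>Out T (last_state p ts). step_prob Qn T P \<sigma> p ts t * real_of_int (edge_val y z t))
        = prob_val T P y z (last_state p ts)"
      unfolding prob_val_def step_prob_def by simp
    then show ?thesis using assms(4) False unfolding sol_II_def by simp
  qed
  finally show ?thesis .
qed

lemma Fv_nonneg: "sol_II Qn T P y z \<Longrightarrow> x \<ge> 0 \<Longrightarrow> K \<ge> 0 \<Longrightarrow> Fv y z p v c x K ts \<ge> 0"
  unfolding Fv_def using gval_nonneg[of Qn T P y z v ts p] by auto

lemma Fstep:
  assumes mdp: "vass_mdp Qn T P" and st: "is_strategy Qn T \<sigma>" and val: "valid_path T p ts"
    and sol: "sol_II Qn T P y z" and x0: "x \<ge> 0" and yc: "y c > 0"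
    and Kdef: "K = (\<Sum>t\<in>T. \<bar>real_of_int (edge_val y z t)\<bar>)"
  shows "(\<Sum>t\<in>T. step_prob Qn T P \<sigma> p ts t * Fv y z p v c x K (ts @ [t])) \<le> Fv y z p v c x K ts"
proof -
  have fin: "finite T" using mdp unfolding vass_mdp_def by auto
  have K0: "K \<ge> 0" unfolding Kdef by (intro sum_nonneg) auto
  let ?sp = "step_prob Qn T P \<sigma> p ts"
  have one: "(\<Sum>t\<in>T. ?sp t) = 1" by (rule sp_sum[OF mdp st val])
  show ?thesis
  proof (cases "Hit v c x ts")
    case True
    then have "(\<Sum>t\<in>T. ?sp t * Fv y z p v c x K (ts @ [t])) = (\<Sum>t\<in>T. ?sp t) * x"
      unfolding Fv_def using Hit_snoc[of v c x ts] by (simp add: sum_distrib_right)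
    then show ?thesis using one True unfolding Fv_def by simp
  next
    case nh: False
    show ?thesis
    proof (cases "NT v ts")
      case False
      then have "Fv y z p v c x K (ts @ [t]) = 0" for t
        unfolding Fv_def using nh Hit_notNT[OF nh False] notNT_snoc[OF False] by simp
      then show ?thesis using nh False unfolding Fv_def by simp
    next
      case nt: True
      let ?g = "gval y z p v ts"
      have g0: "?g \<ge> 0" by (rule gval_nonneg[OF sol nt])
      have bound: "?sp t * Fv y z p v c x K (ts @ [t]) \<le> ?sp t * (?g + K + real_of_int (edge_val y z t))"
        if tT: "t \<in> T" for t
      proof (cases "t \<in> Out T (last_state p ts)")
        case False then show ?thesis by (simp add: step_prob_def)
      next
        case True
        then have ft: "fst t = last_state p ts" unfolding Out_def by auto
        have gs: "gval y z p v (ts @ [t]) = ?g + real_of_int (edge_val y z t)" by (rule gval_snoc[OF ft])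
        have evK: "\<bar>real_of_int (edge_val y z t)\<bar> \<le> K" unfolding Kdef
          by (rule member_le_sum[OF tT]) (auto simp: fin)
        have "Fv y z p v c x K (ts @ [t]) \<le> ?g + K + real_of_int (edge_val y z t)"
        proof (cases "Hit v c x (ts @ [t])")
          case True
          from Hit_snoc_cases[OF True nh] have "NT v (ts @ [t])"
            "x \<le> real_of_int (cval v (ts @ [t]) (length (ts @ [t])) c)" by auto
          from gval_hit[OF sol yc this] have "x \<le> gval y z p v (ts @ [t])" .
          then show ?thesis unfolding Fv_def using True gs K0 by simp
        next
          case False
          then show ?thesis unfolding Fv_def using gs evK g0 by auto
        qed
        moreover have "?sp t \<ge> 0" by (rule sp_nonneg[OF mdp st val])
        ultimately show ?thesis by (rule mult_left_mono)
      qed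
      have "(\<Sum>t\<in>T. ?sp t * Fv y z p v c x K (ts @ [t])) \<le> (\<Sum>t\<in>T. ?sp t * (?g + K + real_of_int (edge_val y z t)))"
        by (rule sum_mono) (rule bound)
      also have "\<dots> = (\<Sum>t\<in>T. ?sp t) * (?g + K) + (\<Sum>t\<in>T. ?sp t * real_of_int (edge_val y z t))"
        by (simp add: algebra_simps sum.distrib sum_distrib_left sum_distrib_right)
      also have "\<dots> \<le> ?g + K" using one sp_ev[OF mdp st val sol] by simp
      finally show ?thesis using nh nt unfolding Fv_def by simp
    qed
  qed
qed

lemma pw_props:
  assumes mdp: "vass_mdp Qn T P" and st: "is_strategy Qn T \<sigma>"
  shows "path_weight Qn T P \<sigma> p ts \<ge> 0 \<and> (path_weight Qn T P \<sigma> p ts \<noteq> 0 \<longrightarrow> valid_path T p ts)"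
proof (induction ts rule: rev_induct)
  case Nil
  then show ?case by (simp add: path_weight_def)
next
  case (snoc t ts)
  have eq: "path_weight Qn T P \<sigma> p (ts @ [t]) = path_weight Qn T P \<sigma> p ts * step_prob Qn T P \<sigma> p ts t"
    by (rule path_weight_snoc) simp
  show ?case
  proof (cases "path_weight Qn T P \<sigma> p ts = 0")
    case True then show ?thesis using eq by simp
  next
    case False
    then have v: "valid_path T p ts" and w0: "path_weight Qn T P \<sigma> p ts \<ge> 0" using snoc by auto
    have s0: "step_prob Qn T P \<sigma> p ts t \<ge> 0" by (rule sp_nonneg[OF mdp st v])
    have "valid_path T p (ts @ [t])" if "step_prob Qn T P \<sigma> p ts t \<noteq> 0"
    proof -
      have "t \<in> Out T (last_state p ts)" using that unfolding step_prob_def by (auto split: if_splits)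
      then show ?thesis using v by (simp add: valid_path_append Out_def)
    qed
    then show ?thesis using eq w0 s0 by auto
  qed
qed

definition Lm :: "('q,'d) trans set \<Rightarrow> nat \<Rightarrow> ('q,'d) trans list set" where
  "Lm T m = {ts. length ts = m \<and> set ts \<subseteq> T}"

lemma Lm_Suc: "Lm T (Suc m) = (\<lambda>(ts, t). ts @ [t]) ` (Lm T m \<times> T)"
proof (rule set_eqI, rule iffI)
  fix us assume "us \<in> Lm T (Suc m)"
  then have "length us = Suc m" "set us \<subseteq> T" by (auto simp: Lm_def)
  then obtain ts t where "us = ts @ [t]"
    by (metis length_Suc_conv_rev)
  then show "us \<in> (\<lambda>(ts, t). ts @ [t]) ` (Lm T m \<times> T)"
    using \<open>length us = Suc m\<close> \<open>set us \<subseteq> T\<close> by (auto simp: Lm_def image_iff)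
qed (auto simp: Lm_def)

lemma Lm_finite: "finite T \<Longrightarrow> finite (Lm T m)"
  unfolding Lm_def using finite_lists_length_eq[of T m] by (simp add: conj_commute)

lemma E_mono:
  assumes mdp: "vass_mdp Qn T P" and st: "is_strategy Qn T \<sigma>"
    and sol: "sol_II Qn T P y z" and x0: "x \<ge> 0" and yc: "y c > 0"
    and Kdef: "K = (\<Sum>t\<in>T. \<bar>real_of_int (edge_val y z t)\<bar>)"
  shows "(\<Sum>ts\<in>Lm T (Suc m). path_weight Qn T P \<sigma> p ts * Fv y z p v c x K ts)
      \<le> (\<Sum>ts\<in>Lm T m. path_weight Qn T P \<sigma> p ts * Fv y z p v c x K ts)"
proof -
  have fin: "finite T" using mdp unfolding vass_mdp_def by auto
  let ?pw = "path_weight Qn T P \<sigma> p" and ?F = "Fv y z p v c x K"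
  have inj: "inj_on (\<lambda>(ts, t). ts @ [t]) (Lm T m \<times> T)"
    by (auto simp: inj_on_def)
  have "(\<Sum>ts\<in>Lm T (Suc m). ?pw ts * ?F ts) = (\<Sum>(ts,t)\<in>Lm T m \<times> T. ?pw (ts @ [t]) * ?F (ts @ [t]))"
    unfolding Lm_Suc by (subst sum.reindex[OF inj]) (simp add: case_prod_unfold)
  also have "\<dots> = (\<Sum>ts\<in>Lm T m. \<Sum>t\<in>T. ?pw (ts @ [t]) * ?F (ts @ [t]))"
    by (rule sum.cartesian_product[symmetric])
  also have "\<dots> = (\<Sum>ts\<in>Lm T m. ?pw ts * (\<Sum>t\<in>T. step_prob Qn T P \<sigma> p ts t * ?F (ts @ [t])))"
    by (intro sum.cong refl) (simp add: path_weight_snoc[OF refl] sum_distrib_left mult.assoc)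
  also have "\<dots> \<le> (\<Sum>ts\<in>Lm T m. ?pw ts * ?F ts)"
  proof (rule sum_mono)
    fix ts assume "ts \<in> Lm T m"
    show "?pw ts * (\<Sum>t\<in>T. step_prob Qn T P \<sigma> p ts t * ?F (ts @ [t])) \<le> ?pw ts * ?F ts"
    proof (cases "?pw ts = 0")
      case True then show ?thesis by simp
    next
      case False
      then have v: "valid_path T p ts" and w0: "?pw ts \<ge> 0" using pw_props[OF mdp st, of p ts] by auto
      show ?thesis by (rule mult_left_mono[OF Fstep[OF mdp st v sol x0 yc Kdef] w0])
    qed
  qed
  finally show ?thesis .
qed

lemma E_bound:
  assumes mdp: "vass_mdp Qn T P" and st: "is_strategy Qn T \<sigma>"
    and sol: "sol_II Qn T P y z" and x0: "x \<ge> 0" and yc: "y c > 0"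
    and Kdef: "K = (\<Sum>t\<in>T. \<bar>real_of_int (edge_val y z t)\<bar>)"
  shows "(\<Sum>ts\<in>Lm T m. path_weight Qn T P \<sigma> p ts * Fv y z p v c x K ts) \<le> Fv y z p v c x K []"
proof (induction m)
  case 0
  have "Lm T 0 = {[]}" by (auto simp: Lm_def)
  then show ?case by (simp add: path_weight_def)
next
  case (Suc m)
  show ?case by (rule order_trans[OF E_mono[OF assms] Suc.IH])
qed

lemma single_bound:
  fixes T :: "('q::finite,'d::finite) trans set"
  assumes mdp: "vass_mdp Qn T P" and st: "is_strategy Qn T \<sigma>"
    and sol: "sol_II Qn T P y z" and x0: "x > 0" and yc: "y c > 0"
    and Kdef: "K = (\<Sum>t\<in>T. \<bar>real_of_int (edge_val y z t)\<bar>)"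
    and v0: "\<forall>c. v c \<ge> 0"
  shows "x * (\<Sum>ts\<in>Lm T m. path_weight Qn T P \<sigma> p ts * (if C_upto v ts c \<ge> ereal x then 1 else 0))
     \<le> gval y z p v [] + K"
proof -
  have K0: "K \<ge> 0" unfolding Kdef by (intro sum_nonneg) auto
  let ?pw = "path_weight Qn T P \<sigma> p" and ?F = "Fv y z p v c x K"
  have "x * (\<Sum>ts\<in>Lm T m. ?pw ts * (if C_upto v ts c \<ge> ereal x then 1 else 0))
      = (\<Sum>ts\<in>Lm T m. ?pw ts * (if C_upto v ts c \<ge> ereal x then x else 0))"
    unfolding sum_distrib_left by (intro sum.cong refl) simp
  also have "\<dots> \<le> (\<Sum>ts\<in>Lm T m. ?pw ts * ?F ts)"
  proof (rule sum_mono)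
    fix ts
    have w0: "?pw ts \<ge> 0" using pw_props[OF mdp st, of p ts] by auto
    have "(if C_upto v ts c \<ge> ereal x then x else 0) \<le> ?F ts"
      using Fv_nonneg[OF sol _ K0, of x p v c ts] x0
      unfolding C_upto_ge Fv_def Hit_def[symmetric] by auto
    then show "?pw ts * (if C_upto v ts c \<ge> ereal x then x else 0) \<le> ?pw ts * ?F ts"
      by (rule mult_left_mono[OF _ w0])
  qed
  also have "\<dots> \<le> ?F []" by (rule E_bound[OF mdp st sol _ yc Kdef]) (use x0 in simp)
  also have "\<dots> \<le> gval y z p v [] + K"
  proof -
    have nt: "NT v ([]::('q,'d) trans list)" unfolding NT_def terminal_def cval_def using v0 by (simp add: not_less)
    show ?thesis
    proof (cases "Hit v c x ([]::('q,'d) trans list)")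
      case True
      then have "x \<le> real_of_int (cval v ([]::('q,'d) trans list) (length ([]::('q,'d) trans list)) c)" unfolding Hit_def by auto
      then have "x \<le> gval y z p v []" by (rule gval_hit[OF sol yc nt])
      then show ?thesis using True K0 unfolding Fv_def by simp
    qed (use nt in \<open>simp add: Fv_def\<close>)
  qed
  finally show ?thesis .
qed

theorem lemma4p4:
  fixes Qn :: "'q::finite set"
    and T :: "('q, 'd::finite) trans set"
    and P :: "('q, 'd) trans \<Rightarrow> real"
    and y :: "'d \<Rightarrow> int" and z :: "'q \<Rightarrow> int"
  assumes "vass_mdp Qn T P"
    and "strongly_connected T"
    and "maximal_sol_II Qn T P y z"
  shows "\<exists>k::real. \<forall>c (\<epsilon>::real) p \<sigma>.
           y c > 0 \<longrightarrow> \<epsilon> > 0 \<longrightarrow> is_strategy Qn T \<sigma> \<longrightarrow>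
           (\<exists>n0::nat. \<forall>n\<ge>n0.
              Prob_C_ge Qn T P \<sigma> p (\<lambda>_. int n) c (real n powr (1 + \<epsilon>))
                \<le> k * real n powr (- \<epsilon>))"
proof -
  have mdp: "vass_mdp Qn T P" by fact
  have sol: "sol_II Qn T P y z" using assms(3) unfolding maximal_sol_II_def by auto
  define K where "K = (\<Sum>t\<in>T. \<bar>real_of_int (edge_val y z t)\<bar>)"
  define Z where "Z = (\<Sum>q\<in>UNIV. real_of_int (z q))"
  define Y where "Y = (\<Sum>i\<in>UNIV. real_of_int (y i))"
  have K0: "K \<ge> 0" unfolding K_def by (intro sum_nonneg) auto
  have Y0: "Y \<ge> 0" using sol unfolding Y_def sol_II_def by (intro sum_nonneg) auto
  have zZ: "real_of_int (z p) \<le> Z" for p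
    unfolding Z_def using sol unfolding sol_II_def by (intro member_le_sum) auto
  have Z0: "Z \<ge> 0" using zZ[of undefined] sol unfolding sol_II_def by (meson of_int_nonneg order_trans)
  show ?thesis
  proof (intro exI[of _ "Z + Y + K"] allI impI)
    fix c :: 'd and \<epsilon> :: real and p :: 'q and \<sigma>
    assume yc: "y c > 0" and e0: "\<epsilon> > 0" and st: "is_strategy Qn T \<sigma>"
    show "\<exists>n0::nat. \<forall>n\<ge>n0. Prob_C_ge Qn T P \<sigma> p (\<lambda>_. int n) c (real n powr (1 + \<epsilon>))
                \<le> (Z + Y + K) * real n powr (- \<epsilon>)"
    proof (intro exI[of _ 1] allI impI)
      fix n :: nat assume n1: "1 \<le> n"
      define x where "x = real n powr (1 + \<epsilon>)"
      have npos: "real n > 0" using n1 by simp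
      have xeq: "x = real n * real n powr \<epsilon>" unfolding x_def using npos by (simp add: powr_add)
      have pe: "real n powr \<epsilon> > 0" using npos by simp
      have x0: "x > 0" using xeq npos pe by simp
      have g: "gval y z p (\<lambda>_. int n) [] = real_of_int (z p) + real n * Y"
        unfolding gval_def lin_def cval_def Y_def by (simp add: sum_distrib_left)
      have bnd: "gval y z p (\<lambda>_. int n) [] + K \<le> real n * (Z + Y + K)"
      proof -
        have "Z \<le> real n * Z" using mult_right_mono[of 1 "real n" Z] Z0 n1 by simp
        then have "real_of_int (z p) \<le> real n * Z" using zZ[of p] by linarith
        moreover have "K \<le> real n * K" using mult_right_mono[of 1 "real n" K] K0 n1 by simp
        ultimately show ?thesis unfolding g by (simp add: algebra_simps)
      qed
      have each: "(\<Sum>ts\<in>Lm T m. path_weight Qn T P \<sigma> p ts * (if C_upto (\<lambda>_. int n) ts c \<ge> ereal x then 1 else 0))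
           \<le> (Z + Y + K) * real n powr (- \<epsilon>)" for m
      proof -
        have "x * (\<Sum>ts\<in>Lm T m. path_weight Qn T P \<sigma> p ts * (if C_upto (\<lambda>_. int n) ts c \<ge> ereal x then 1 else 0))
           \<le> real n * (Z + Y + K)"
          using single_bound[OF mdp st sol x0 yc K_def, where v="\<lambda>_. int n" and m=m and p=p] bnd by simp
        then have "(\<Sum>ts\<in>Lm T m. path_weight Qn T P \<sigma> p ts * (if C_upto (\<lambda>_. int n) ts c \<ge> ereal x then 1 else 0))
           \<le> real n * (Z + Y + K) / x"
          using x0 by (simp add: field_simps)
        also have "\<dots> = (Z + Y + K) * real n powr (- \<epsilon>)"
          unfolding xeq using npos pe by (simp add: powr_minus field_simps)
        finally show ?thesis .
      qed
      show "Prob_C_ge Qn T P \<sigma> p (\<lambda>_. int n) c (real n powr (1 + \<epsilon>)) \<le> (Z + Y + K) * real n powr (- \<epsilon>)"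
        unfolding Prob_C_ge_def x_def[symmetric]
        by (rule cSUP_least) (use each in \<open>auto simp: Lm_def\<close>)
    qed
  qed
qed

end
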